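(* Let $0<c<1$, $0<p<1\le\beta$, $D\ge3$ an integer, and let $\mathcal G=\{G_1,\dots,G_t\}$ be a family of $(p,\beta)$-jumbled graphs on a common vertex set $V$. Let $\Delta$ be a positive integer with $\Delta\le(1-c)p|V|$ and set $s=2t^{1/2}\beta p^{-1}$. Let $\mathcal F$ be a $[t]$-edge-colored star forest with maximum degree at most $\Delta$ and $|V(\mathcal F)|+5sD<c|V|/2$. Then there exist $V'\subseteq V$ with $|V'|\ge|V|-s$ and a $(2s,D)$-good embedding of $\mathcal F$, regarded as a rooted graph in which every vertex is a root, into $\mathcal G[V']$.
   Context: A graph family $\mathcal G=\{G_1,\dots,G_t\}$ is a collection of $t$ simple graphs on a common finite vertex set $V$; $\mathcal G[V']=\{G_1[V'],\dots,G_t[V']\}$. For $X\subseteq V\times[t]$, $\Gamma_{\mathcal G}(X)=\bigcup_{(v,i)\in X}\{u\in V:uv\in E(G_i)\}$. For reals $0<p<1\le\beta$, a graph $G$ is $(p,\beta)$-jumbled if $\bigl|e_G(X,Y)-p|X||Y|\bigr|\le\beta\sqrt{|X||Y|}$ for all $X,Y\subseteq V(G)$, where $e_G(X,Y)$ is the number of ordered pairs $(x,y)\in X\times Y$ with $xy\in E(G)$. A $[t]$-edge-colored graph $\mathcal H$ is a simple graph with each edge colored in $[t]$; $H_i$ is its spanning subgraph of color-$i$ edges and $\deg_{H_i}(h)$ the number of color-$i$ edges at $h$. An embedding $\phi:\mathcal H\hookrightarrow\mathcal G$ is an injective map $V(\mathcal H)\to V$ with $\phi(x)\phi(y)\in E(G_i)$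 for every edge $xy$ of color $i$. For a rooted graph all of whose vertices are roots, fixed $D$, and an embedding $\phi$ into a family on vertex set $V$, set $R(X,\phi)=|\Gamma_{\mathcal G}(X)\setminus\phi(V(\mathcal H))|-\sum_{(v,i)\in X}[D-\deg_{H_i}(\phi^{-1}(v))]$ for $X\subseteq V\times[t]$, with $\deg_{H_i}(\phi^{-1}(v))=0$ if $v\notin\phi(V(\mathcal H))$; $\phi$ is $(s,D)$-good if $R(X,\phi)\ge0$ for every $X$ with $|X|\le s$ (for $\mathcal G[V']$, $V$ is replaced by $V'$ and $\Gamma$ computed in $\mathcal G[V']$). A star forest is a graph each of whose components is a star. *)

theory Defs
  imports Complex_Main
begin

definition simple_graph_on :: "'v set \<Rightarrow> ('v \<Rightarrow> 'v \<Rightarrow> bool) \<Rightarrow> bool" where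
  "simple_graph_on V E \<longleftrightarrow> (\<forall>u v. E u v \<longrightarrow> u \<in> V \<and> v \<in> V \<and> u \<noteq> v \<and> E v u)"

definition e_count :: "('v \<Rightarrow> 'v \<Rightarrow> bool) \<Rightarrow> 'v set \<Rightarrow> 'v set \<Rightarrow> nat" where
  "e_count E X Y = card {(x, y). x \<in> X \<and> y \<in> Y \<and> E x y}"

definition jumbled :: "'v set \<Rightarrow> ('v \<Rightarrow> 'v \<Rightarrow> bool) \<Rightarrow> real \<Rightarrow> real \<Rightarrow> bool" where
  "jumbled V E p \<beta> \<longleftrightarrow> simple_graph_on V E \<and>
     (\<forall>X Y. X \<subseteq> V \<longrightarrow> Y \<subseteq> V \<longrightarrow>
        \<bar>real (e_count E X Y) - p * real (card X) * real (card Y)\<bar>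
          \<le> \<beta> * sqrt (real (card X) * real (card Y)))"

definition colored_graph :: "'h set \<Rightarrow> ('h \<Rightarrow> 'h \<Rightarrow> bool) \<Rightarrow> ('h \<Rightarrow> 'h \<Rightarrow> nat) \<Rightarrow> nat \<Rightarrow> bool" where
  "colored_graph VH EH col t \<longleftrightarrow> finite VH \<and> simple_graph_on VH EH \<and>
     (\<forall>x y. EH x y \<longrightarrow> col x y = col y x \<and> col x y \<in> {1..t})"

definition colored_deg :: "('h \<Rightarrow> 'h \<Rightarrow> bool) \<Rightarrow> ('h \<Rightarrow> 'h \<Rightarrow> nat) \<Rightarrow> nat \<Rightarrow> 'h \<Rightarrow> nat" where
  "colored_deg EH col i h = card {y. EH h y \<and> col h y = i}"

text \<open>Every connected component is a star (all its edges meet a common centre).\<close>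
definition star_forest :: "'h set \<Rightarrow> ('h \<Rightarrow> 'h \<Rightarrow> bool) \<Rightarrow> bool" where
  "star_forest VH EH \<longleftrightarrow> (\<forall>x\<in>VH. \<exists>c\<in>{y. EH\<^sup>*\<^sup>* x y}.
     \<forall>u v. EH\<^sup>*\<^sup>* x u \<longrightarrow> EH\<^sup>*\<^sup>* x v \<longrightarrow> EH u v \<longrightarrow> u = c \<or> v = c)"

definition max_degree_le :: "'h set \<Rightarrow> ('h \<Rightarrow> 'h \<Rightarrow> bool) \<Rightarrow> nat \<Rightarrow> bool" where
  "max_degree_le VH EH \<Delta> \<longleftrightarrow> (\<forall>x\<in>VH. card {y. EH x y} \<le> \<Delta>)"

definition is_embedding :: "'h set \<Rightarrow> ('h \<Rightarrow> 'h \<Rightarrow> bool) \<Rightarrow> ('h \<Rightarrow> 'h \<Rightarrow> nat)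
     \<Rightarrow> (nat \<Rightarrow> 'v \<Rightarrow> 'v \<Rightarrow> bool) \<Rightarrow> 'v set \<Rightarrow> ('h \<Rightarrow> 'v) \<Rightarrow> bool" where
  "is_embedding VH EH col G V' \<phi> \<longleftrightarrow> inj_on \<phi> VH \<and> \<phi> ` VH \<subseteq> V' \<and>
     (\<forall>x y. EH x y \<longrightarrow> G (col x y) (\<phi> x) (\<phi> y))"

definition Gamma :: "(nat \<Rightarrow> 'v \<Rightarrow> 'v \<Rightarrow> bool) \<Rightarrow> 'v set \<Rightarrow> ('v \<times> nat) set \<Rightarrow> 'v set" where
  "Gamma G V' X = {u \<in> V'. \<exists>(v, i)\<in>X. G i u v}"

definition emb_deg :: "'h set \<Rightarrow> ('h \<Rightarrow> 'h \<Rightarrow> bool) \<Rightarrow> ('h \<Rightarrow> 'h \<Rightarrow> nat) \<Rightarrow> ('h \<Rightarrow> 'v)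
     \<Rightarrow> 'v \<Rightarrow> nat \<Rightarrow> nat" where
  "emb_deg VH EH col \<phi> v i =
     (if v \<in> \<phi> ` VH then colored_deg EH col i (the_inv_into VH \<phi> v) else 0)"

definition Rval :: "(nat \<Rightarrow> 'v \<Rightarrow> 'v \<Rightarrow> bool) \<Rightarrow> 'v set \<Rightarrow> 'h set \<Rightarrow> ('h \<Rightarrow> 'h \<Rightarrow> bool)
     \<Rightarrow> ('h \<Rightarrow> 'h \<Rightarrow> nat) \<Rightarrow> nat \<Rightarrow> ('h \<Rightarrow> 'v) \<Rightarrow> ('v \<times> nat) set \<Rightarrow> int" where
  "Rval G V' VH EH col D \<phi> X =
     int (card (Gamma G V' X - \<phi> ` VH))
     - (\<Sum>(v, i)\<in>X. int D - int (emb_deg VH EH col \<phi> v i))"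

text \<open>(s,D)-good embedding into G[V'] (all vertices of the graph are roots).\<close>
definition good_embedding :: "real \<Rightarrow> nat \<Rightarrow> nat \<Rightarrow> (nat \<Rightarrow> 'v \<Rightarrow> 'v \<Rightarrow> bool) \<Rightarrow> 'v set
     \<Rightarrow> 'h set \<Rightarrow> ('h \<Rightarrow> 'h \<Rightarrow> bool) \<Rightarrow> ('h \<Rightarrow> 'h \<Rightarrow> nat) \<Rightarrow> ('h \<Rightarrow> 'v) \<Rightarrow> bool" where
  "good_embedding s D t G V' VH EH col \<phi> \<longleftrightarrow>
     is_embedding VH EH col G V' \<phi> \<and>
     (\<forall>X. X \<subseteq> V' \<times> {1..t} \<longrightarrow> real (card X) \<le> s \<longrightarrow> Rval G V' VH EH col D \<phi> X \<ge> 0)"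

end

theory Submission
  imports Defs
begin


lemma jumbled_empty:
  assumes "jumbled V E p \<beta>" "X \<subseteq> V" "Y \<subseteq> V" "p > 0" "\<forall>x\<in>X. \<forall>y\<in>Y. \<not> E x y"
  shows "p^2 * (real (card X) * real (card Y)) \<le> \<beta>^2"
proof -
  have "{(x, y). x \<in> X \<and> y \<in> Y \<and> E x y} = {}" using assms(5) by auto
  then have e: "e_count E X Y = 0" unfolding e_count_def by (metis card.empty)
  have j: "\<bar>real (e_count E X Y) - p * real (card X) * real (card Y)\<bar>
          \<le> \<beta> * sqrt (real (card X) * real (card Y))"
    using assms(1-3) unfolding jumbled_def by blast
  define q where "q = sqrt (real (card X) * real (card Y))"
  have q0: "q \<ge> 0" unfolding q_def by simp
  have qq: "q^2 = real (card X) * real (card Y)" unfolding q_def by simp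
  have "p * q^2 \<le> \<beta> * q" using j e qq q_def by (simp add: mult.assoc)
  show ?thesis
  proof (cases "q = 0")
    case True then have "real (card X) * real (card Y) = 0" using qq by simp
    then show ?thesis by (metis mult_zero_right zero_le_power2)
  next
    case False
    then have "p * q \<le> \<beta>" using \<open>p * q^2 \<le> \<beta> * q\<close> q0 by (simp add: power2_eq_square)
    moreover have "p * q \<ge> 0" using assms(4) q0 by simp
    ultimately have "(p*q)^2 \<le> \<beta>^2" by (simp add: power_mono)
    then show ?thesis using qq by (simp add: power_mult_distrib)
  qed
qed

lemma low_deg_small:
  assumes "jumbled V E p \<beta>" "finite V" "A \<subseteq> V" "p > 0"
    and "real \<Delta> \<le> M" and "d = real (card A) - M / p" and "d > 0"
  shows "p^2 * real (card {v\<in>A. card {w\<in>A. E v w} < \<Delta>}) * d^2 \<le> \<beta>^2 * real (card A)"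
proof -
  define L where "L = {v\<in>A. card {w\<in>A. E v w} < \<Delta>}"
  have fA: "finite A" using assms(2,3) finite_subset by blast
  have fL: "finite L" using fA unfolding L_def by simp
  have LV: "L \<subseteq> V" using assms(3) unfolding L_def by auto
  have "{(x, y). x \<in> L \<and> y \<in> A \<and> E x y} = Sigma L (\<lambda>x. {y\<in>A. E x y})" by auto
  then have "e_count E L A = (\<Sum>x\<in>L. card {y\<in>A. E x y})"
    unfolding e_count_def using fL fA by (simp add: card_SigmaI)
  also have "\<dots> \<le> (\<Sum>x\<in>L. \<Delta>)" by (rule sum_mono) (auto simp: L_def)
  finally have "e_count E L A \<le> card L * \<Delta>" by simp
  then have e: "real (e_count E L A) \<le> real (card L) * real \<Delta>"
    by (metis of_nat_le_iff of_nat_mult)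
  have j: "\<bar>real (e_count E L A) - p * real (card L) * real (card A)\<bar>
          \<le> \<beta> * sqrt (real (card L) * real (card A))"
    using assms(1,3) LV unfolding jumbled_def by blast
  define l where "l = real (card L)"
  define a where "a = real (card A)"
  have l0: "l \<ge> 0" "a \<ge> 0" unfolding l_def a_def by auto
  have "p * l * a - l * real \<Delta> \<le> \<beta> * sqrt (l * a)" using j e unfolding l_def a_def by linarith
  moreover have "l * real \<Delta> \<le> l * M" using assms(5) l0 by (simp add: mult_left_mono)
  ultimately have "p * l * a - l * M \<le> \<beta> * sqrt (l * a)" by linarith
  moreover have "p * l * a - l * M = p * l * d"
  proof -
    have "p * d = p * a - M" using assms(4,6) unfolding a_def by (simp add: field_simps)
    then show ?thesis by (metis mult.commute mult.left_commute right_diff_distrib)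
  qed
  ultimately have k: "p * l * d \<le> \<beta> * sqrt (l * a)" by simp
  have "p * l * d \<ge> 0" using assms(4,7) l0 by simp
  then have "(p * l * d)^2 \<le> (\<beta> * sqrt (l * a))^2" using k by (simp add: power_mono)
  also have "\<dots> = \<beta>^2 * (l * a)" using l0 by (simp add: power_mult_distrib)
  finally have k2: "l * (p^2 * l * d^2) \<le> l * (\<beta>^2 * a)" by (simp add: power_mult_distrib algebra_simps power2_eq_square)
  have "p^2 * l * d^2 \<le> \<beta>^2 * a"
  proof (cases "l = 0")
    case True then show ?thesis using l0 by simp
  next
    case False then have "l > 0" using l0 by simp
    then show ?thesis using k2 by simp
  qed
  then show ?thesis unfolding L_def l_def a_def .
qed

lemma greedy_sdr:
  assumes "finite L" "\<forall>y\<in>L. finite (S y) \<and> card L \<le> card (S y)"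
  shows "\<exists>f. inj_on f L \<and> (\<forall>y\<in>L. f y \<in> S y)"
  using assms
proof (induction L rule: finite_induct)
  case empty then show ?case by simp
next
  case (insert y L)
  have "\<forall>z\<in>L. finite (S z) \<and> card L \<le> card (S z)" using insert by auto
  then obtain f where f: "inj_on f L" "\<forall>z\<in>L. f z \<in> S z" using insert.IH by blast
  have cS: "card (S y) \<ge> card L + 1" "finite (S y)" using insert by auto
  have "card (f ` L) \<le> card L" by (rule card_image_le) (rule insert.hyps)
  then have "\<not> S y \<subseteq> f ` L" using cS card_mono[OF finite_imageI[OF insert.hyps(1)]] by fastforce
  then obtain w where w: "w \<in> S y" "w \<notin> f ` L" by blast
  let ?g = "f(y := w)"
  have "inj_on ?g (insert y L)" using f(1) w(2) insert.hyps(2)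
    unfolding inj_on_def
  proof (intro ballI impI)
    fix a b assume ab: "a \<in> insert y L" "b \<in> insert y L" "?g a = ?g b"
    show "a = b"
    proof (cases "a = y"; cases "b = y")
      assume "a \<noteq> y" "b \<noteq> y" then show ?thesis using ab f(1) by (simp add: inj_on_def)
    next
      assume "a = y" "b \<noteq> y" then show ?thesis using ab w(2) by auto
    next
      assume "a \<noteq> y" "b = y" then show ?thesis using ab w(2) by auto
    qed simp
  qed
  moreover have "\<forall>z\<in>insert y L. ?g z \<in> S z" using f(2) w(1) insert.hyps(2) by auto
  ultimately show ?case by (intro exI[where x="?g"]) (simp only:)
qed



lemma rtranclp_sym:
  assumes "\<forall>u v. E u v \<longrightarrow> E v u" "E\<^sup>*\<^sup>* x y" shows "E\<^sup>*\<^sup>* y x"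
  using assms(2)
proof (induction rule: rtranclp_induct)
  case base then show ?case by simp
next
  case (step y z) then show ?case using assms(1) by (meson converse_rtranclp_into_rtranclp)
qed

lemma star_comp:
  assumes sym: "\<forall>u v. E u v \<longrightarrow> E v u" and irr: "\<forall>u. \<not> E u u"
    and xc: "E\<^sup>*\<^sup>* x c"
    and st: "\<forall>u v. E\<^sup>*\<^sup>* x u \<longrightarrow> E\<^sup>*\<^sup>* x v \<longrightarrow> E u v \<longrightarrow> u = c \<or> v = c"
  shows "{y. E\<^sup>*\<^sup>* x y} = insert c {y. E c y}"
proof (intro equalityI subsetI)
  fix y assume "y \<in> {y. E\<^sup>*\<^sup>* x y}"
  then have xy: "E\<^sup>*\<^sup>* x y" by simp
  show "y \<in> insert c {y. E c y}"
  proof (cases "y = c")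
    case True then show ?thesis by simp
  next
    case yc: False
    show ?thesis
    proof (cases "y = x")
      case True
      from xc have "x = c \<or> (\<exists>w. E x w \<and> E\<^sup>*\<^sup>* w c)" by (meson converse_rtranclpE)
      then obtain w where w: "E x w" using True yc by blast
      then have "E\<^sup>*\<^sup>* x w" by simp
      then have "x = c \<or> w = c" using st[rule_format, of x w] w by simp
      then have "E x c" using True yc w by auto
      then show ?thesis using sym True by auto
    next
      case False
      have "\<exists>u. E\<^sup>*\<^sup>* x u \<and> E u y"
        using xy False by (cases rule: rtranclp.cases) auto
      then obtain u where u: "E\<^sup>*\<^sup>* x u" "E u y" by blast
      then have "u = c \<or> y = c" using st[rule_format, of u y] xy u by simp
      then show ?thesis using u yc by auto
    qed
  qed
next
  fix y assume "y \<in> insert c {y. E c y}"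
  then show "y \<in> {y. E\<^sup>*\<^sup>* x y}" using xc by auto
qed



lemma center_exists:
  assumes "finite V" "\<forall>i\<in>{1..t}. jumbled V (G i) p \<beta>" "p > 0" "A \<subseteq> V"
    "real \<Delta> \<le> M" "d = real (card A) - M / p" "d > 0" "card A > 0"
    "real t * \<beta>^2 < p^2 * d^2"
  shows "\<exists>v\<in>A. \<forall>i\<in>{1..t}. card {w\<in>A. G i v w} \<ge> \<Delta>"
proof -
  define L where "L i = {v\<in>A. card {w\<in>A. G i v w} < \<Delta>}" for i
  define a where "a = real (card A)"
  have Li: "p^2 * real (card (L i)) * d^2 \<le> \<beta>^2 * a" if "i \<in> {1..t}" for i
    unfolding L_def a_def using low_deg_small[OF _ assms(1,4,3,5,6,7)] assms(2) that by blast
  have "(\<Sum>i\<in>{1..t}. p^2 * d^2 * real (card (L i))) \<le> (\<Sum>i\<in>{1..t}. \<beta>^2 * a)"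
    by (rule sum_mono) (use Li in \<open>simp add: mult_ac\<close>)
  then have s1: "p^2 * d^2 * (\<Sum>i\<in>{1..t}. real (card (L i))) \<le> real t * \<beta>^2 * a"
    by (simp add: sum_distrib_left)
  have "card (\<Union>i\<in>{1..t}. L i) \<le> (\<Sum>i\<in>{1..t}. card (L i))" by (rule card_UN_le) simp
  then have s2: "real (card (\<Union>i\<in>{1..t}. L i)) \<le> (\<Sum>i\<in>{1..t}. real (card (L i)))"
    by (metis of_nat_le_iff of_nat_sum)
  have pd: "p^2 * d^2 > 0" using assms(3,7) by simp
  have a0: "a > 0" unfolding a_def using assms(8) by simp
  have "p^2 * d^2 * real (card (\<Union>i\<in>{1..t}. L i)) \<le> real t * \<beta>^2 * a"
    using s1 s2 pd by (meson mult_left_mono less_imp_le order_trans)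
  also have "\<dots> < p^2 * d^2 * a" using assms(9) a0 by simp
  finally have "real (card (\<Union>i\<in>{1..t}. L i)) < a" using pd by (simp only: mult_less_cancel_left_pos)
  then have "card (\<Union>i\<in>{1..t}. L i) < card A" unfolding a_def by simp
  then have "\<not> A \<subseteq> (\<Union>i\<in>{1..t}. L i)"
    using card_mono[of "\<Union>i\<in>{1..t}. L i" A] assms(1,4) finite_subset
    by (metis (no_types, lifting) L_def UN_least mem_Collect_eq not_le subsetI finite_UN_I finite_atLeastAtMost)
  then obtain v where "v \<in> A" "v \<notin> (\<Union>i\<in>{1..t}. L i)" by blast
  then show ?thesis unfolding L_def by (auto simp: not_less)
qed

lemma card_Z_sum:
  fixes t :: nat
  assumes "Z \<subseteq> V \<times> {1..t}" "finite V"
  shows "card Z = (\<Sum>i\<in>{1..t}. card {v. (v, i) \<in> Z})"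
proof -
  have eq: "Z = (\<lambda>(i, v). (v, i)) ` (SIGMA i:{1..t}. {v. (v, i) \<in> Z})" using assms(1) by force
  have inj: "inj_on (\<lambda>(i, v). (v, i)) (SIGMA i:{1..t}. {v. (v, i) \<in> Z})" by (auto simp: inj_on_def)
  have fin: "\<forall>i\<in>{1..t}. finite {v. (v, i) \<in> Z}"
  proof
    fix i show "finite {v. (v, i) \<in> Z}" using assms by (rule_tac finite_subset[of _ V]) auto
  qed
  have "card Z = card (SIGMA i:{1..t}. {v. (v, i) \<in> Z})" by (subst eq) (rule card_image[OF inj])
  also have "\<dots> = (\<Sum>i\<in>{1..t}. card {v. (v, i) \<in> Z})" apply (rule card_SigmaI) using fin by simp_all
  finally show ?thesis .
qed

lemma bad_bound:
  assumes "finite V" "\<forall>i\<in>{1..t}. jumbled V (G i) p \<beta>" "p > 0" "Z \<subseteq> V \<times> {1..t}" "Y \<subseteq> V"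
    "Y \<inter> Gamma G V Z = {}"
  shows "p^2 * (real (card Z) * real (card Y)) \<le> real t * \<beta>^2"
proof -
  define Zi where "Zi i = {v. (v, i) \<in> Z}" for i
  have each: "p^2 * (real (card (Zi i)) * real (card Y)) \<le> \<beta>^2" if i: "i \<in> {1..t}" for i
  proof (rule jumbled_empty)
    show j: "jumbled V (G i) p \<beta>" using assms(2) i by blast
    show "Zi i \<subseteq> V" using assms(4) unfolding Zi_def by blast
    show "Y \<subseteq> V" by fact
    show "p > 0" by fact
    show "\<forall>x\<in>Zi i. \<forall>y\<in>Y. \<not> G i x y"
    proof (intro ballI notI)
      fix x y assume x: "x \<in> Zi i" and y: "y \<in> Y" and e: "G i x y"
      have "G i y x" using j e unfolding jumbled_def simple_graph_on_def by blast
      then have "y \<in> Gamma G V Z" using x y assms(5) unfolding Gamma_def Zi_def by blast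
      then show False using y assms(6) by blast
    qed
  qed
  have "(\<Sum>i\<in>{1..t}. p^2 * real (card Y) * real (card (Zi i))) \<le> (\<Sum>i\<in>{1..t}. \<beta>^2)"
    by (rule sum_mono) (use each in \<open>simp add: mult_ac\<close>)
  then have "p^2 * real (card Y) * real (\<Sum>i\<in>{1..t}. card (Zi i)) \<le> real t * \<beta>^2"
    by (simp add: sum_distrib_left)
  moreover have "card Z = (\<Sum>i\<in>{1..t}. card (Zi i))" unfolding Zi_def using card_Z_sum[OF assms(4,1)] .
  ultimately show ?thesis by (simp add: mult_ac)
qed



lemma forest_embed:
  fixes VH :: "'h set" and EH :: "'h \<Rightarrow> 'h \<Rightarrow> bool" and W :: "'v set"
  assumes sg: "\<forall>u v. EH u v \<longrightarrow> u \<in> VH \<and> v \<in> VH \<and> u \<noteq> v \<and> EH v u"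
    and fin: "finite VH"
    and star: "\<forall>x\<in>VH. \<exists>c. EH\<^sup>*\<^sup>* x c \<and> (\<forall>u v. EH\<^sup>*\<^sup>* x u \<longrightarrow> EH\<^sup>*\<^sup>* x v \<longrightarrow> EH u v \<longrightarrow> u = c \<or> v = c)"
    and deg: "\<forall>x\<in>VH. card {y. EH x y} \<le> \<Delta>"
    and cols: "\<forall>x y. EH x y \<longrightarrow> col x y = col y x \<and> col x y \<in> {1..t}"
    and Gsym: "\<forall>i\<in>{1..t}. \<forall>u v. G i u v \<longrightarrow> G i v u \<and> u \<noteq> v"
    and finW: "finite W"
    and center: "\<forall>A. A \<subseteq> W \<longrightarrow> real (card A) \<ge> a0 \<longrightarrow> (\<exists>v\<in>A. \<forall>i\<in>{1..t}. card {w\<in>A. G i v w} \<ge> \<Delta>)"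
  shows "K \<subseteq> VH \<Longrightarrow> (\<forall>x y. x \<in> K \<longrightarrow> EH x y \<longrightarrow> y \<in> K) \<Longrightarrow> real (card W) \<ge> a0 + real (card K) \<Longrightarrow>
     \<exists>\<phi>. inj_on \<phi> K \<and> \<phi> ` K \<subseteq> W \<and> (\<forall>x y. x \<in> K \<longrightarrow> EH x y \<longrightarrow> G (col x y) (\<phi> x) (\<phi> y))"
proof (induction "card K" arbitrary: K rule: less_induct)
  case less
  show ?case
  proof (cases "K = {}")
    case True then show ?thesis by simp
  next
    case False
    then obtain x where xK: "x \<in> K" by blast
    have finK: "finite K" using less.prems(1) fin finite_subset by blast
    have EHsym: "\<forall>u v. EH u v \<longrightarrow> EH v u" using sg by blast
    have irr: "\<forall>u. \<not> EH u u" using sg by blast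
    obtain c where xc: "EH\<^sup>*\<^sup>* x c"
      and st: "\<forall>u v. EH\<^sup>*\<^sup>* x u \<longrightarrow> EH\<^sup>*\<^sup>* x v \<longrightarrow> EH u v \<longrightarrow> u = c \<or> v = c"
      using star xK less.prems(1) by blast
    define C where "C = {y. EH\<^sup>*\<^sup>* x y}"
    define Lv where "Lv = {y. EH c y}"
    have CL: "C = insert c Lv" unfolding C_def Lv_def by (rule star_comp[OF EHsym irr xc st])
    have CK: "C \<subseteq> K"
    proof
      fix y assume "y \<in> C"
      then have "EH\<^sup>*\<^sup>* x y" unfolding C_def by simp
      then show "y \<in> K"
      proof (induction rule: rtranclp_induct)
        case base then show ?case using xK .
      next
        case (step y z) then show ?case using less.prems(2) by blast
      qed
    qed
    define K' where "K' = K - C"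
    have xC: "x \<in> C" unfolding C_def by simp
    have "K' \<subset> K" unfolding K'_def using xC xK by blast
    then have cardK': "card K' < card K" using finK by (rule psubset_card_mono[rotated])
    have K'cl: "\<forall>u y. u \<in> K' \<longrightarrow> EH u y \<longrightarrow> y \<in> K'"
    proof (intro allI impI)
      fix u y assume u: "u \<in> K'" "EH u y"
      then have yK: "y \<in> K" using less.prems(2) unfolding K'_def by blast
      have "y \<notin> C"
      proof
        assume "y \<in> C"
        then have "EH\<^sup>*\<^sup>* x y" unfolding C_def by simp
        moreover have "EH y u" using u(2) EHsym by blast
        ultimately have "EH\<^sup>*\<^sup>* x u" by (rule rtranclp.rtrancl_into_rtrancl)
        then show False using u(1) unfolding K'_def C_def by simp
      qed
      then show "y \<in> K'" using yK unfolding K'_def by simp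
    qed
    have K'VH: "K' \<subseteq> VH" using less.prems(1) unfolding K'_def by blast
    have finC: "finite C" using CK finK finite_subset by blast
    have cardKK: "card K = card K' + card C"
    proof -
      have "card K' = card K - card C" unfolding K'_def using finC CK by (rule card_Diff_subset)
      moreover have "card C \<le> card K" using CK finK by (rule card_mono[rotated])
      ultimately show ?thesis by simp
    qed
    have "real (card W) \<ge> a0 + real (card K')" using less.prems(3) cardKK by simp
    then obtain \<phi>' where \<phi>': "inj_on \<phi>' K'" "\<phi>' ` K' \<subseteq> W"
      "\<forall>x y. x \<in> K' \<longrightarrow> EH x y \<longrightarrow> G (col x y) (\<phi>' x) (\<phi>' y)"
      using less.hyps[OF cardK' K'VH K'cl] by blast
    define A where "A = W - \<phi>' ` K'"
    have AW: "A \<subseteq> W" unfolding A_def by blast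
    have finA: "finite A" using AW finW finite_subset by blast
    have "W \<subseteq> A \<union> \<phi>' ` K'" unfolding A_def by blast
    then have "card W \<le> card (A \<union> \<phi>' ` K')" using finA \<phi>'(2) finW
      by (intro card_mono) (auto intro: finite_subset)
    also have "\<dots> \<le> card A + card (\<phi>' ` K')" by (rule card_Un_le)
    finally have "card W \<le> card A + card (\<phi>' ` K')" .
    moreover have "card (\<phi>' ` K') = card K'" using \<phi>'(1) by (rule card_image)
    ultimately have "real (card A) \<ge> a0" using less.prems(3) cardKK by simp
    then obtain v where vA: "v \<in> A" and vdeg: "\<forall>i\<in>{1..t}. card {w\<in>A. G i v w} \<ge> \<Delta>"
      using center AW by blast
    have cVH: "c \<in> VH" using CL CK less.prems(1) by blast
    have "Lv \<subseteq> VH" unfolding Lv_def using sg by blast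
    then have finLv: "finite Lv" using fin by (rule finite_subset)
    define S where "S y = {w\<in>A. G (col c y) v w}" for y
    have "\<forall>y\<in>Lv. finite (S y) \<and> card Lv \<le> card (S y)"
    proof
      fix y assume "y \<in> Lv"
      then have "col c y \<in> {1..t}" using cols unfolding Lv_def by blast
      then have "card (S y) \<ge> \<Delta>" using vdeg unfolding S_def by blast
      moreover have "card Lv \<le> \<Delta>" using deg cVH unfolding Lv_def by blast
      ultimately show "finite (S y) \<and> card Lv \<le> card (S y)" using finA unfolding S_def by simp
    qed
    then obtain f where f: "inj_on f Lv" "\<forall>y\<in>Lv. f y \<in> S y" using greedy_sdr[OF finLv] by blast
    have fv: "\<forall>y\<in>Lv. f y \<in> A \<and> f y \<noteq> v \<and> G (col c y) v (f y)"
    proof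
      fix y assume y: "y \<in> Lv"
      then have "col c y \<in> {1..t}" using cols unfolding Lv_def by blast
      then show "f y \<in> A \<and> f y \<noteq> v \<and> G (col c y) v (f y)" using f(2) y Gsym unfolding S_def by blast
    qed
    have cLv: "c \<notin> Lv" using irr unfolding Lv_def by blast
    have CK': "C \<inter> K' = {}" unfolding K'_def by blast
    define \<phi> where "\<phi> z = (if z = c then v else if z \<in> Lv then f z else \<phi>' z)" for z
    have KU: "K = K' \<union> C" unfolding K'_def using CK by blast
    have phiA: "\<forall>z\<in>C. \<phi> z \<in> A" using fv vA CL unfolding \<phi>_def by auto
    have phiK': "\<forall>z\<in>K'. \<phi> z = \<phi>' z" using CK' CL unfolding \<phi>_def by auto
    have dis: "\<forall>z\<in>K'. \<phi>' z \<notin> A" unfolding A_def by blast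
    have injC: "inj_on \<phi> C"
    proof (rule inj_onI)
      fix a b assume ab: "a \<in> C" "b \<in> C" "\<phi> a = \<phi> b"
      show "a = b"
      proof (cases "a = c")
        case True
        then show ?thesis using ab fv CL cLv unfolding \<phi>_def by (auto split: if_splits)
      next
        case False
        then have aL: "a \<in> Lv" using ab CL by blast
        show ?thesis
        proof (cases "b = c")
          case True
          then show ?thesis using ab fv aL cLv False unfolding \<phi>_def by (auto split: if_splits)
        next
          case False
          then have "b \<in> Lv" using ab CL by blast
          then show ?thesis using ab aL f(1) \<open>a \<noteq> c\<close> False unfolding \<phi>_def by (auto simp: inj_on_def)
        qed
      qed
    qed
    have injK: "inj_on \<phi> K"
      unfolding KU
    proof (rule inj_on_Un[THEN iffD2], intro conjI)
      show "inj_on \<phi> K'" using \<phi>'(1) phiK' by (simp add: inj_on_def)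
      show "inj_on \<phi> C" by (rule injC)
      show "\<phi> ` (K' - C) \<inter> \<phi> ` (C - K') = {}" using phiK' phiA dis by fastforce
    qed
    have imK: "\<phi> ` K \<subseteq> W" unfolding KU using phiK' \<phi>'(2) phiA AW by auto
    have edges: "\<forall>a b. a \<in> K \<longrightarrow> EH a b \<longrightarrow> G (col a b) (\<phi> a) (\<phi> b)"
    proof (intro allI impI)
      fix a b assume a: "a \<in> K" and ab: "EH a b"
      show "G (col a b) (\<phi> a) (\<phi> b)"
      proof (cases "a \<in> K'")
        case True
        then have "b \<in> K'" using K'cl ab by blast
        then show ?thesis using True phiK' \<phi>'(3) ab by simp
      next
        case False
        then have aC: "a \<in> C" using a KU by blast
        then have xa: "EH\<^sup>*\<^sup>* x a" unfolding C_def by simp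
        then have xb: "EH\<^sup>*\<^sup>* x b" using ab by (rule rtranclp.rtrancl_into_rtrancl)
        have "a = c \<or> b = c" using st[rule_format, OF xa xb ab] .
        then show ?thesis
        proof
          assume ac: "a = c"
          then have "b \<in> Lv" using ab unfolding Lv_def by simp
          then show ?thesis using ac fv cLv unfolding \<phi>_def by auto
        next
          assume bc: "b = c"
          then have aL: "a \<in> Lv" using ab EHsym unfolding Lv_def by blast
          then have "G (col c a) v (f a)" using fv by blast
          moreover have "col c a = col a c" using cols ab bc by metis
          moreover have "col c a \<in> {1..t}" using cols aL unfolding Lv_def by blast
          ultimately have "G (col a c) (f a) v" using Gsym by metis
          then show ?thesis using bc aL cLv unfolding \<phi>_def by auto
        qed
      qed
    qed
    show ?thesis using injK imK edges by blast
  qed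
qed



theorem lemma3p6:
  fixes V :: "'v set" and G :: "nat \<Rightarrow> 'v \<Rightarrow> 'v \<Rightarrow> bool" and t :: nat
    and p \<beta> c :: real and D \<Delta> :: nat
    and VH :: "'h set" and EH :: "'h \<Rightarrow> 'h \<Rightarrow> bool" and col :: "'h \<Rightarrow> 'h \<Rightarrow> nat"
  assumes "finite V"
    and "0 < c" and "c < 1" and "0 < p" and "p < 1" and "1 \<le> \<beta>" and "D \<ge> 3"
    and "\<forall>i\<in>{1..t}. jumbled V (G i) p \<beta>"
    and "\<Delta> > 0" and "real \<Delta> \<le> (1 - c) * p * real (card V)"
    and "colored_graph VH EH col t" and "star_forest VH EH" and "max_degree_le VH EH \<Delta>"
    and "real (card VH) + 5 * (2 * sqrt (real t) * \<beta> / p) * real D < c * real (card V) / 2"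
  shows "\<exists>V' \<subseteq> V. real (card V') \<ge> real (card V) - 2 * sqrt (real t) * \<beta> / p \<and>
           (\<exists>\<phi>. good_embedding (2 * (2 * sqrt (real t) * \<beta> / p)) D t G V' VH EH col \<phi>)"
proof -
  note finV = assms(1) and c0 = assms(2) and c1 = assms(3) and p0 = assms(4) and p1 = assms(5)
    and b1 = assms(6) and D3 = assms(7) and jum = assms(8) and Dl = assms(10)
    and cg = assms(11) and sf = assms(12) and md = assms(13) and hyp = assms(14)
  define n where "n = real (card V)"
  define s where "s = 2 * sqrt (real t) * \<beta> / p"
  have s0: "s \<ge> 0" unfolding s_def using p0 b1 by simp
  have ss: "p^2 * s^2 = 4 * (real t * \<beta>^2)" unfolding s_def using p0
    by (simp add: power_divide power_mult_distrib)
  have hyp': "real (card VH) + 5 * s * real D < c * n / 2" using hyp unfolding s_def n_def by simp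
  have n0: "n > 0"
  proof -
    have "0 \<le> real (card VH) + 5 * s * real D" using s0 by simp
    then have "c * n > 0" using hyp' by linarith
    then show ?thesis using c0 by (simp add: zero_less_mult_iff)
  qed
  have D3r: "real D \<ge> 3" using D3 by simp
  have "s * 3 \<le> s * real D" using D3r s0 by (rule mult_left_mono)
  then have sD: "15 * s \<le> 5 * s * real D" by simp
  have s_small: "30 * s < c * n" using hyp' sD by simp
  have cn: "c * n \<le> n" using c1 n0 by simp
  have tcase: "t = 0 \<and> s = 0 \<or> s \<ge> 2"
  proof (cases "t = 0")
    case True then show ?thesis unfolding s_def by simp
  next
    case False
    then have "sqrt (real t) \<ge> 1" by simp
    moreover have "\<beta> / p \<ge> 1" using p0 p1 b1 by (simp add: field_simps)
    ultimately have "sqrt (real t) * (\<beta> / p) \<ge> 1" by (metis mult_mono' dual_order.trans le_numeral_extra(4) mult_1 zero_le_one)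
    then show ?thesis unfolding s_def by simp
  qed
  have Gsym: "\<forall>i\<in>{1..t}. \<forall>u v. G i u v \<longrightarrow> G i v u \<and> u \<noteq> v"
    using jum unfolding jumbled_def simple_graph_on_def by blast
  define r0 where "r0 = nat \<lceil>(3 * real D + 4) * s\<rceil>"
  have x0: "(3 * real D + 4) * s \<ge> 0" using s0 by simp
  then have "\<lceil>(3 * real D + 4) * s\<rceil> \<ge> 0" by simp
  then have r0i: "real r0 = real_of_int \<lceil>(3 * real D + 4) * s\<rceil>" unfolding r0_def by simp
  have r0a: "real r0 \<ge> (3 * real D + 4) * s" unfolding r0i by (rule le_of_int_ceiling)
  have r0b: "real r0 < (3 * real D + 4) * s + 1" unfolding r0i using ceiling_correct[of "(3 * real D + 4) * s"] by linarith
  have r0c: "s = 0 \<Longrightarrow> r0 = 0" unfolding r0_def by simp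
  have D5: "(3 * real D + 5) * s \<le> 5 * s * real D" using D3 s0
    by (simp add: algebra_simps mult_left_mono)
  have "(3 * real D + 4) * s \<le> n" using D5 hyp' cn s0 by (simp add: algebra_simps) 
  then have "r0 \<le> card V" unfolding r0_def n_def by (simp add: nat_le_iff ceiling_le_iff)
  then obtain T where TV: "T \<subseteq> V" and cT: "card T = r0" using obtain_subset_with_card_n by metis
  define bad where "bad Z \<longleftrightarrow> card (Gamma G V Z \<inter> T - fst ` Z) < D * card Z" for Z
  define P where "P = {Z. Z \<subseteq> V \<times> {1..t} \<and> real (card Z) \<le> 3 * s \<and> (Z = {} \<or> bad Z)}"
  have finP: "finite P"
  proof (rule finite_subset)
    show "P \<subseteq> Pow (V \<times> {1..t})" unfolding P_def by blast
    show "finite (Pow (V \<times> {1..t}))" using finV by simp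
  qed
  have eP: "{} \<in> P" unfolding P_def using s0 by simp
  define m where "m = Max (card ` P)"
  have "m \<in> card ` P" unfolding m_def using finP eP by (intro Max_in) auto
  then obtain B where BP: "B \<in> P" and Bm: "card B = m" by blast
  have Bmax: "\<forall>Z\<in>P. card Z \<le> card B" unfolding Bm m_def using finP by simp
  have BV: "B \<subseteq> V \<times> {1..t}" and B3: "real (card B) \<le> 3 * s" and Bbad: "B = {} \<or> bad B"
    using BP unfolding P_def by auto
  have finB: "finite B" using BV finV by (meson finite_SigmaI finite_atLeastAtMost finite_subset)
  have Bbound: "card (Gamma G V B \<inter> T - fst ` B) \<le> D * card B"
    using Bbad unfolding bad_def Gamma_def by auto
  have Bs: "real (card B) \<le> s"
  proof (cases "B = {}")
    case True then show ?thesis using s0 by simp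
  next
    case False
    then have bB: "bad B" using Bbad by simp
    define Y where "Y = T - fst ` B - Gamma G V B"
    have YV: "Y \<subseteq> V" unfolding Y_def using TV by blast
    have YG: "Y \<inter> Gamma G V B = {}" unfolding Y_def by blast
    have pb: "p^2 * (real (card B) * real (card Y)) \<le> real t * \<beta>^2"
      by (rule bad_bound[OF finV jum p0 BV YV YG])
    have finT: "finite T" using TV finV finite_subset by blast
    have "T \<subseteq> Y \<union> fst ` B \<union> (Gamma G V B \<inter> T - fst ` B)" unfolding Y_def by blast
    then have "card T \<le> card (Y \<union> fst ` B \<union> (Gamma G V B \<inter> T - fst ` B))"
      using finT finB YV finV by (intro card_mono) (auto intro: finite_subset)
    also have "\<dots> \<le> card Y + card (fst ` B) + card (Gamma G V B \<inter> T - fst ` B)"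
      by (meson card_Un_le add_le_mono order_trans le_refl)
    also have "\<dots> < card Y + card B + D * card B"
      using bB card_image_le[OF finB, of fst] unfolding bad_def by linarith
    finally have "real r0 < real (card Y) + real (card B) + real D * real (card B)"
      using cT by (metis of_nat_add of_nat_less_iff of_nat_mult)
    moreover have "(real D + 1) * real (card B) \<le> (real D + 1) * (3 * s)"
      by (rule mult_left_mono) (use B3 in simp_all)
    ultimately have "real r0 < real (card Y) + (real D + 1) * (3 * s)" by (simp add: algebra_simps)
    then have Yb: "real (card Y) > s" using r0a by (simp add: algebra_simps)
    show ?thesis
    proof (rule ccontr)
      assume "\<not> ?thesis"
      then have "real (card B) > s" by simp
      then have "real (card B) * real (card Y) > s * s" using Yb s0
        by (meson mult_strict_mono' less_imp_le)
      then have "p^2 * (real (card B) * real (card Y)) > p^2 * s^2" using p0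
        by (simp add: power2_eq_square)
      then show False using pb ss by (smt (verit) mult_nonneg_nonneg of_nat_0_le_iff zero_le_power2)
    qed
  qed
  define V' where "V' = V - fst ` B"
  define W where "W = V - T - fst ` B"
  have V'V: "V' \<subseteq> V" unfolding V'_def by blast
  have WV': "W \<subseteq> V'" unfolding W_def V'_def by blast
  have WT: "W \<inter> T = {}" unfolding W_def by blast
  have finW: "finite W" using finV unfolding W_def by simp
  have cfB: "card (fst ` B) \<le> card B" by (rule card_image_le[OF finB])
  have cV': "real (card V') \<ge> n - s"
  proof -
    have "card V - card (fst ` B) \<le> card V'" unfolding V'_def by (rule diff_card_le_card_Diff) (rule finite_imageI[OF finB])
    then have "real (card V) - real (card (fst ` B)) \<le> real (card V')" by linarith
    then show ?thesis using cfB Bs unfolding n_def by linarith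
  qed
  have cW: "real (card W) \<ge> n - real r0 - real (card B)"
  proof -
    have finT: "finite T" using TV finV finite_subset by blast
    have "W = V - (T \<union> fst ` B)" unfolding W_def by blast
    moreover have "card V - card (T \<union> fst ` B) \<le> card (V - (T \<union> fst ` B))"
      by (rule diff_card_le_card_Diff) (use finT finB in simp)
    ultimately have "card V - card (T \<union> fst ` B) \<le> card W" by simp
    moreover have "card (T \<union> fst ` B) \<le> card T + card B" using card_Un_le[of T "fst ` B"] cfB by linarith
    ultimately show ?thesis using cT unfolding n_def by linarith
  qed
  define a0 where "a0 = (1 - c) * n + c * n / 4"
  have a0e: "a0 = n - 3 / 4 * (c * n)" unfolding a0_def by (simp add: algebra_simps)
  have e1: "(3 * real D + 4) * s = 3 * (real D * s) + 4 * s" by (simp add: algebra_simps)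
  have e2: "(3 * real D + 5) * s = 3 * (real D * s) + 5 * s" by (simp add: algebra_simps)
  have e3: "5 * s * real D = 5 * (real D * s)" by (simp add: algebra_simps)
  have Wbig: "real (card W) \<ge> a0 + real (card VH)"
    using tcase
  proof
    assume "t = 0 \<and> s = 0"
    then have "r0 = 0" "real (card B) \<le> 0" "s = 0" using r0c Bs by auto
    moreover have "c * n > 0" using c0 n0 by simp
    ultimately show ?thesis using cW hyp' unfolding a0e by simp
  next
    assume "s \<ge> 2"
    then have "5 * s * real D \<ge> 30" using sD by linarith
    then have "c * n \<ge> 4" using hyp' by linarith
    then show ?thesis using cW hyp' r0b Bs D5 unfolding a0e e1 e2 e3 by linarith
  qed
  have center: "\<forall>A. A \<subseteq> W \<longrightarrow> real (card A) \<ge> a0 \<longrightarrow> (\<exists>v\<in>A. \<forall>i\<in>{1..t}. card {w\<in>A. G i v w} \<ge> \<Delta>)"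
  proof (intro allI impI)
    fix A assume AW: "A \<subseteq> W" and Aa: "real (card A) \<ge> a0"
    define d where "d = real (card A) - (1 - c) * p * n / p"
    have dd: "d = real (card A) - (1 - c) * n" unfolding d_def using p0 by simp
    have d4: "d \<ge> c * n / 4" using Aa unfolding dd a0_def by simp
    have dpos: "d > 0" using d4 c0 n0 by (smt (verit) divide_pos_pos mult_pos_pos)
    have Apos: "card A > 0" using Aa dpos dd c1 n0
      by (metis dd diff_gt_0_iff_gt gr0I le_less_trans linorder_not_less of_nat_0 diff_ge_0_iff_ge mult_nonneg_nonneg c1 less_imp_le n0 diff_le_0_iff_le not_less)
    have "s / 2 < d" using s_small d4 s0 dpos by linarith
    then have "(s/2)^2 < d^2" using s0 by (simp add: power_strict_mono)
    then have "p^2 * (s/2)^2 < p^2 * d^2" using p0 by simp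
    moreover have "p^2 * (s/2)^2 = real t * \<beta>^2" using ss by (simp add: power_divide)
    ultimately have tb: "real t * \<beta>^2 < p^2 * d^2" by simp
    show "\<exists>v\<in>A. \<forall>i\<in>{1..t}. card {w\<in>A. G i v w} \<ge> \<Delta>"
      by (rule center_exists[OF finV jum p0 _ Dl d_def[unfolded n_def] dpos Apos tb])
         (use AW WV' V'V in auto)
  qed
  have sg: "\<forall>u v. EH u v \<longrightarrow> u \<in> VH \<and> v \<in> VH \<and> u \<noteq> v \<and> EH v u"
    and finVH: "finite VH" and cols: "\<forall>x y. EH x y \<longrightarrow> col x y = col y x \<and> col x y \<in> {1..t}"
    using cg unfolding colored_graph_def simple_graph_on_def by auto
  have star: "\<forall>x\<in>VH. \<exists>c. EH\<^sup>*\<^sup>* x c \<and> (\<forall>u v. EH\<^sup>*\<^sup>* x u \<longrightarrow> EH\<^sup>*\<^sup>* x v \<longrightarrow> EH u v \<longrightarrow> u = c \<or> v = c)"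
    using sf unfolding star_forest_def by auto
  have deg: "\<forall>x\<in>VH. card {y. EH x y} \<le> \<Delta>" using md unfolding max_degree_le_def by blast
  obtain \<phi> where \<phi>: "inj_on \<phi> VH" "\<phi> ` VH \<subseteq> W" "\<forall>x y. x \<in> VH \<longrightarrow> EH x y \<longrightarrow> G (col x y) (\<phi> x) (\<phi> y)"
    using forest_embed[OF sg finVH star deg cols Gsym finW center, of VH] Wbig sg by blast
  have emb: "is_embedding VH EH col G V' \<phi>"
    unfolding is_embedding_def using \<phi> WV' sg by blast
  have goodX: "Rval G V' VH EH col D \<phi> X \<ge> 0"
    if XV: "X \<subseteq> V' \<times> {1..t}" and X2: "real (card X) \<le> 2 * s" for X
  proof -
    have finX: "finite X" using XV finV V'V by (meson finite_SigmaI finite_atLeastAtMost finite_subset)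
    have finG': "finite (Gamma G V' X)" using finV V'V unfolding Gamma_def by (auto intro: finite_subset)
    have key: "D * card X \<le> card (Gamma G V' X \<inter> T)"
    proof (rule ccontr)
      assume "\<not> ?thesis"
      then have lt: "card (Gamma G V' X \<inter> T) < D * card X" by simp
      then have Xne: "card X > 0" by (cases "card X = 0") auto
      define Z where "Z = X \<union> B"
      have XB: "X \<inter> B = {}" using XV unfolding V'_def by force
      have cZ: "card Z = card X + card B" unfolding Z_def using finX finB XB by (rule card_Un_disjoint)
      have ZV: "Z \<subseteq> V \<times> {1..t}" unfolding Z_def using XV BV V'V by blast
      have Z3: "real (card Z) \<le> 3 * s" using cZ X2 Bs by simp
      have sub: "Gamma G V Z \<inter> T - fst ` Z \<subseteq> (Gamma G V' X \<inter> T) \<union> (Gamma G V B \<inter> T - fst ` B)"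
        unfolding Z_def Gamma_def V'_def by auto
      have finGB: "finite (Gamma G V B \<inter> T - fst ` B)" using finV TV by (auto intro: finite_subset)
      have "card (Gamma G V Z \<inter> T - fst ` Z) \<le> card ((Gamma G V' X \<inter> T) \<union> (Gamma G V B \<inter> T - fst ` B))"
        using sub finG' finGB by (intro card_mono) auto
      also have "\<dots> \<le> card (Gamma G V' X \<inter> T) + card (Gamma G V B \<inter> T - fst ` B)" by (rule card_Un_le)
      also have "\<dots> < D * card X + D * card B" using lt Bbound by linarith
      also have "\<dots> = D * card Z" using cZ by (simp add: algebra_simps)
      finally have "bad Z" unfolding bad_def .
      then have "Z \<in> P" unfolding P_def using ZV Z3 by blast
      then have "card Z \<le> card B" using Bmax by blast
      then show False using cZ Xne by simp
    qed
    have "Gamma G V' X \<inter> T \<subseteq> Gamma G V' X - \<phi> ` VH" using \<phi>(2) WT by blast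
    then have "card (Gamma G V' X \<inter> T) \<le> card (Gamma G V' X - \<phi> ` VH)" using finG' by (intro card_mono) auto
    then have "D * card X \<le> card (Gamma G V' X - \<phi> ` VH)" using key by linarith
    then have c1': "int D * int (card X) \<le> int (card (Gamma G V' X - \<phi> ` VH))"
      by (metis of_nat_le_iff of_nat_mult)
    have "(\<Sum>(v, i)\<in>X. int D - int (emb_deg VH EH col \<phi> v i)) \<le> (\<Sum>x\<in>X. int D)"
      by (rule sum_mono) (simp split: prod.split)
    also have "\<dots> = int D * int (card X)" by simp
    finally show ?thesis unfolding Rval_def using c1' by linarith
  qed
  have good: "good_embedding (2 * s) D t G V' VH EH col \<phi>"
    unfolding good_embedding_def using emb goodX by blast
  show ?thesis
    using V'V cV' good unfolding s_def n_def by blast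
qed


end
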